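(* For every $n\ge 3$, $\lceil \log_2 n\rceil\le \mathrm{isat}(n,\mathcal{N})\le 2n$.
   Context: $\mathcal{B}_n$ denotes the Boolean lattice $(2^{[n]},\subseteq)$. A family $\mathcal{F}\subseteq 2^{[n]}$ (ordered by inclusion) is induced-$\mathcal{P}$-saturated if it contains no induced copy of $\mathcal{P}$ (an injection $f$ with $u\le v\iff f(u)\subseteq f(v)$) but every family $\mathcal{F}'$ with $\mathcal{F}\subsetneq\mathcal{F}'\subseteq 2^{[n]}$ contains one. $\mathrm{isat}(n,\mathcal{P})$ is the minimum size of an induced-$\mathcal{P}$-saturated family in $\mathcal{B}_n$. $\mathcal{N}$ is the four-element poset on $\{A,B,C,D\}$ whose only strict relations are $A<B$, $C<B$, $C<D$ (so $A\parallel C$, $A\parallel D$, $B\parallel D$). *)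

theory Defs
  imports Complex_Main
begin

text \<open>The Boolean lattice B_n is modelled as the power set of [n] = {1..n},
  ordered by inclusion. A family is a set of subsets of {1..n}.\<close>

datatype N_elt = NA | NB | NC | ND

definition N_le :: "N_elt \<Rightarrow> N_elt \<Rightarrow> bool" where
  "N_le u v \<longleftrightarrow> u = v \<or> (u = NA \<and> v = NB) \<or> (u = NC \<and> v = NB) \<or> (u = NC \<and> v = ND)"

definition contains_induced_N :: "'a set set \<Rightarrow> bool" where
  "contains_induced_N F \<longleftrightarrow>
     (\<exists>f :: N_elt \<Rightarrow> 'a set. inj f \<and> (\<forall>u. f u \<in> F) \<and>
        (\<forall>u v. N_le u v \<longleftrightarrow> f u \<subseteq> f v))"

definition induced_N_saturated :: "nat \<Rightarrow> nat set set \<Rightarrow> bool" where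
  "induced_N_saturated n F \<longleftrightarrow>
     F \<subseteq> Pow {1..n} \<and> \<not> contains_induced_N F \<and>
     (\<forall>F'. F \<subset> F' \<and> F' \<subseteq> Pow {1..n} \<longrightarrow> contains_induced_N F')"

definition isat_N :: "nat \<Rightarrow> nat" where
  "isat_N n = (LEAST k. \<exists>F. induced_N_saturated n F \<and> card F = k)"

end

theory Submission
  imports Defs
begin

lemma N_sep:
  "u \<noteq> v \<Longrightarrow> \<exists>w\<in>{NA,NB,NC,ND}. w \<noteq> u \<and> w \<noteq> v \<and>
     \<not> ((N_le w u \<longleftrightarrow> N_le w v) \<and> (N_le u w \<longleftrightarrow> N_le v w))"
  by (cases u; cases v; simp add: N_le_def)

lemma N_elt_all: "(\<forall>u. P u) \<longleftrightarrow> P NA \<and> P NB \<and> P NC \<and> P ND"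
  by (metis N_elt.exhaust)

lemma clone_lemma:
  assumes nf: "\<not> contains_induced_N F" and AF: "A \<in> F" and SF: "S \<notin> F"
    and cl: "\<And>B. B \<in> F \<Longrightarrow> B \<noteq> A \<Longrightarrow> (B \<subseteq> S \<longleftrightarrow> B \<subseteq> A) \<and> (S \<subseteq> B \<longleftrightarrow> A \<subseteq> B)"
  shows "\<not> contains_induced_N (insert S F)"
proof
  assume "contains_induced_N (insert S F)"
  then obtain f :: "N_elt \<Rightarrow> 'a set" where inj: "inj f" and mem: "\<forall>u. f u \<in> insert S F"
    and rel: "\<forall>u v. N_le u v \<longleftrightarrow> f u \<subseteq> f v"
    unfolding contains_induced_N_def by blast
  show False
  proof (cases "S \<in> range f")
    case False
    then have "\<forall>u. f u \<in> F" using mem by auto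
    then show False using nf inj rel unfolding contains_induced_N_def by blast
  next
    case True
    then obtain u where u: "f u = S" by auto
    show False
    proof (cases "A \<in> range f")
      case False
      define g where "g = f(u := A)"
      have gF: "\<forall>w. g w \<in> F" using mem u AF unfolding g_def
        by (metis fun_upd_apply insertE inj injD)
      have other: "\<And>w. w \<noteq> u \<Longrightarrow> f w \<in> F \<and> f w \<noteq> A"
        using mem u inj False by (metis insertE injD rangeI)
      have ginj: "inj g"
        unfolding inj_def g_def using inj other
        by (metis fun_upd_apply injD)
      have grel: "\<forall>w v. N_le w v \<longleftrightarrow> g w \<subseteq> g v"
      proof (intro allI)
        fix w v
        show "N_le w v \<longleftrightarrow> g w \<subseteq> g v"
        proof (cases "w = u"; cases "v = u")
          assume "w = u" "v = u" then show ?thesis using rel by (simp add: g_def)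
        next
          assume "w = u" "v \<noteq> u" then show ?thesis
            using rel other[of v] cl[of "f v"] u by (simp add: g_def)
        next
          assume "w \<noteq> u" "v = u" then show ?thesis
            using rel other[of w] cl[of "f w"] u by (simp add: g_def)
        next
          assume "w \<noteq> u" "v \<noteq> u" then show ?thesis using rel by (simp add: g_def)
        qed
      qed
      show False using nf ginj gF grel unfolding contains_induced_N_def by blast
    next
      case True
      then obtain v where v: "f v = A" by auto
      have uv: "u \<noteq> v" using u v AF SF by auto
      obtain w where w: "w \<noteq> u" "w \<noteq> v"
        "\<not> ((N_le w u \<longleftrightarrow> N_le w v) \<and> (N_le u w \<longleftrightarrow> N_le v w))"
        using N_sep[OF uv] by blast
      have fw: "f w \<in> F" "f w \<noteq> A" "f w \<noteq> S"
        using mem w inj u v by (metis insertE injD)+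
      show False using w(3) rel cl[OF fw(1,2)] u v by auto
    qed
  qed
qed

definition Fam :: "nat \<Rightarrow> nat set set" where
  "Fam n = insert {} ((\<lambda>i. {i}) ` {1..n} \<union> (\<lambda>k. {1..k}) ` {2..n})"

lemma Fam_card: assumes "n \<ge> 1" shows "card (Fam n) \<le> 2 * n"
proof -
  have "card (Fam n) \<le> Suc (card ((\<lambda>i. {i::nat}) ` {1..n} \<union> (\<lambda>k. {1..k}) ` {2..n}))"
    unfolding Fam_def by (simp add: card_insert_le_m1 card_insert_if)
  also have "\<dots> \<le> Suc (card ((\<lambda>i. {i::nat}) ` {1..n}) + card ((\<lambda>k. {1..k}) ` {2..n}))"
    using card_Un_le by (metis Suc_le_mono)
  also have "\<dots> \<le> Suc (card {1..n} + card {2..n})"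
    using card_image_le[of "{1..n}" "\<lambda>i. {i::nat}"] card_image_le[of "{2..n}" "\<lambda>k. {1..k::nat}"]
    by simp
  also have "\<dots> \<le> 2 * n" using assms by simp
  finally show ?thesis .
qed

lemma Fam_sub: "Fam n \<subseteq> Pow {1..n}"
  unfolding Fam_def by auto

lemma Fam_super:
  assumes "X \<in> Fam n" "Y \<in> Fam n" "X \<noteq> {}" "X \<subset> Y"
  shows "\<exists>k. Y = {1..k} \<and> k \<ge> 2"
  using assms unfolding Fam_def by auto

lemma Fam_free: "\<not> contains_induced_N (Fam n)"
proof
  assume "contains_induced_N (Fam n)"
  then obtain f :: "N_elt \<Rightarrow> nat set" where inj: "inj f" and mem: "\<forall>u. f u \<in> Fam n"
    and rel: "\<forall>u v. N_le u v \<longleftrightarrow> f u \<subseteq> f v"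
    unfolding contains_induced_N_def by blast
  have "f NA \<noteq> {}" using rel[rule_format, of NA NC] by (auto simp: N_le_def)
  moreover have "f NC \<noteq> {}" using rel[rule_format, of NC NA] by (auto simp: N_le_def)
  moreover have "f NA \<subset> f NB" using rel[rule_format, of NA NB] inj
    by (metis N_elt.distinct(1) injD psubsetI N_le_def)
  moreover have "f NC \<subset> f ND" using rel[rule_format, of NC ND] inj
    by (metis N_elt.distinct(11) injD psubsetI N_le_def)
  ultimately obtain j k where "f NB = {1..j}" "f ND = {1..k}"
    using Fam_super mem by metis
  then have "f NB \<subseteq> f ND \<or> f ND \<subseteq> f NB" by (cases "j \<le> k") auto
  then show False using rel by (auto simp: N_le_def)
qed

lemma mkN:
  assumes "A \<in> F" "B \<in> F" "C \<in> F" "D \<in> F" "A \<subseteq> B" "C \<subseteq> B" "C \<subseteq> D"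
    "\<not> A \<subseteq> C" "\<not> C \<subseteq> A" "\<not> A \<subseteq> D" "\<not> D \<subseteq> A" "\<not> B \<subseteq> D" "\<not> D \<subseteq> B"
    "\<not> B \<subseteq> A" "\<not> B \<subseteq> C" "\<not> D \<subseteq> C"
  shows "contains_induced_N F"
proof -
  define f where "f = (\<lambda>u. case u of NA \<Rightarrow> A | NB \<Rightarrow> B | NC \<Rightarrow> C | ND \<Rightarrow> D)"
  have "inj f" unfolding inj_def N_elt_all f_def using assms by auto
  moreover have "\<forall>u. f u \<in> F" unfolding N_elt_all f_def using assms by auto
  moreover have "\<forall>u v. N_le u v \<longleftrightarrow> f u \<subseteq> f v" unfolding N_elt_all f_def N_le_def
    using assms by auto
  ultimately show ?thesis unfolding contains_induced_N_def by blast
qed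

lemma int_not_single: assumes "2 \<le> (c::nat)" shows "\<not> {1..c} \<subseteq> {x}"
proof
  assume h: "{1..c} \<subseteq> {x}"
  have "1 \<in> {1..c}" "c \<in> {1..c}" using assms by auto
  then have "1 = x" "c = x" using h by blast+
  then show False using assms by simp
qed

lemma Fam_sat:
  assumes SP: "S \<subseteq> {1..n}" and SF: "S \<notin> Fam n"
  shows "contains_induced_N (insert S (Fam n))"
proof -
  have fin: "finite S" using SP finite_subset by blast
  have ne: "S \<noteq> {}" using SF unfolding Fam_def by auto
  then obtain c where c: "c \<in> S" by auto
  have "S \<noteq> {c}" using SF SP c unfolding Fam_def by auto
  then obtain d where d: "d \<in> S" "d \<noteq> c" using c by auto
  obtain c s where cs: "c \<in> S" "s \<in> S" "c < s"
    using c d by (metis linorder_neqE_nat)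
  have c1: "c \<ge> 1" "s \<le> n" using cs SP by auto
  show ?thesis
  proof (cases "1 \<in> S")
    case True
    have "\<exists>a\<in>{1..n}. a \<notin> S \<and> (\<exists>s\<in>S. a < s)"
    proof (rule ccontr)
      assume H: "\<not> ?thesis"
      define m where "m = Max S"
      have mS: "m \<in> S" using fin ne m_def by simp
      have "s \<le> m" using fin cs m_def by simp
      have "S = {1..m}"
      proof
        show "S \<subseteq> {1..m}" using fin m_def SP by auto
        show "{1..m} \<subseteq> S" using H mS SP by fastforce
      qed
      moreover have "m \<in> {2..n}" using \<open>s \<le> m\<close> cs c1 mS SP by auto
      ultimately show False using SF unfolding Fam_def by blast
    qed
    then obtain a s where a: "a \<in> {1..n}" "a \<notin> S" "s \<in> S" "a < s" by blast
    have "a \<noteq> 1" using a True by auto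
    then have a2: "a \<ge> 2" using a by simp
    show ?thesis
    proof (rule mkN[of "{s}" _ S "{1}" "{1..a}"])
      show "{s} \<in> insert S (Fam n)" using a SP unfolding Fam_def by auto
      show "{1} \<in> insert S (Fam n)" using a unfolding Fam_def by auto
      show "{1..a} \<in> insert S (Fam n)" using a a2 unfolding Fam_def by auto
      have "a \<in> {1..a}" using a by simp
      then show "\<not> {1..a} \<subseteq> S" using a by blast
      show "\<not> S \<subseteq> {1..a}" using a by (meson atLeastAtMost_iff not_less subsetD)
      show "\<not> {1..a} \<subseteq> {s}"
      proof
        assume h: "{1..a} \<subseteq> {s}"
        have "1 \<in> {1..a}" "a \<in> {1..a}" using a2 by auto
        then have "1 = s" "a = s" using h by auto
        then show False using a2 by simp
      qed
      show "\<not> {s} \<subseteq> {1..a}" using a by auto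
      show "\<not> S \<subseteq> {s}" using True a by auto
      show "\<not> S \<subseteq> {1}" using True a by auto
      show "\<not> {1..a} \<subseteq> {1}"
      proof
        assume h: "{1..a} \<subseteq> {1}"
        have "a \<in> {1..a}" using a2 by auto
        then have "a \<in> {1}" using h by blast
        then show False using a2 by simp
      qed
    qed (use a a2 True in simp_all)
  next
    case False
    have "c \<noteq> 1" using False cs by auto
    then have c2: "c \<ge> 2" using c1 by simp
    show ?thesis
    proof (rule mkN[of "{1}" _ "{1..c}" "{c}" S])
      have "(1::nat) \<in> {1..n}" using c1 cs by simp
      then show "{1} \<in> insert S (Fam n)" unfolding Fam_def by (intro insertI2 UnI1 imageI)
      show "{c} \<in> insert S (Fam n)" using c1 cs unfolding Fam_def by auto
      show "{1..c} \<in> insert S (Fam n)" using c1 c2 cs unfolding Fam_def by auto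
      show "\<not> {1..c} \<subseteq> {1}" using c2 by (rule int_not_single)
      show "\<not> {1..c} \<subseteq> {c}" using c2 by (rule int_not_single)
      have "(1::nat) \<in> {1..c}" using c2 by simp
      then show "\<not> {1..c} \<subseteq> S" using False by blast
      show "\<not> S \<subseteq> {1..c}" using cs by (meson atLeastAtMost_iff not_less subsetD)
      show "\<not> S \<subseteq> {1}" using False cs by auto
      show "\<not> S \<subseteq> {c}" using cs by auto
      show "\<not> {1} \<subseteq> S" using False by auto
    qed (use cs c2 False in simp_all)
  qed
qed

lemma Fam_saturated: assumes "n \<ge> 1" shows "induced_N_saturated n (Fam n)"
  unfolding induced_N_saturated_def
proof (intro conjI allI impI)
  show "Fam n \<subseteq> Pow {1..n}" by (rule Fam_sub)
  show "\<not> contains_induced_N (Fam n)" by (rule Fam_free)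
  fix F' assume H: "Fam n \<subset> F' \<and> F' \<subseteq> Pow {1..n}"
  then obtain S where S: "S \<in> F'" "S \<notin> Fam n" by blast
  then have "contains_induced_N (insert S (Fam n))" using Fam_sat H by blast
  moreover have "insert S (Fam n) \<subseteq> F'" using H S by blast
  ultimately show "contains_induced_N F'" unfolding contains_induced_N_def by blast
qed

lemma empty_not_sat: "\<not> contains_induced_N {{}::'a set}"
proof
  assume "contains_induced_N {{}::'a set}"
  then obtain f :: "N_elt \<Rightarrow> 'a set" where "inj f" "\<forall>u. f u \<in> {{}}"
    unfolding contains_induced_N_def by blast
  then have "f NA = f NB" by simp
  with \<open>inj f\<close> show False by (metis N_elt.distinct(1) injD)
qed

lemma lower:
  assumes sat: "induced_N_saturated n F"
  shows "n \<le> 2 ^ card F"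
proof (rule ccontr)
  assume "\<not> n \<le> 2 ^ card F"
  then have lt: "2 ^ card F < n" by simp
  have FP: "F \<subseteq> Pow {1..n}" and nf: "\<not> contains_induced_N F"
    and satu: "\<And>F'. F \<subset> F' \<Longrightarrow> F' \<subseteq> Pow {1..n} \<Longrightarrow> contains_induced_N F'"
    using sat unfolding induced_N_saturated_def by blast+
  have finF: "finite F" using FP finite_subset by (metis finite_Pow_iff finite_atLeastAtMost)
  define g where "g x = {A\<in>F. x \<in> A}" for x :: nat
  have "\<not> inj_on g {1..n}"
  proof
    assume "inj_on g {1..n}"
    moreover have "g ` {1..n} \<subseteq> Pow F" unfolding g_def by auto
    ultimately have "card {1..n} \<le> card (Pow F)" using card_inj_on_le finF by blast
    then show False using lt card_Pow[OF finF] by simp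
  qed
  then obtain i j where ij: "i \<in> {1..n}" "j \<in> {1..n}" "i \<noteq> j" "g i = g j"
    unfolding inj_on_def by blast
  have twin: "\<And>A. A \<in> F \<Longrightarrow> i \<in> A \<longleftrightarrow> j \<in> A"
  proof -
    fix A assume "A \<in> F"
    then show "i \<in> A \<longleftrightarrow> j \<in> A" using ij(4) unfolding g_def by blast
  qed
  have finA: "\<And>B. B \<in> F \<Longrightarrow> finite B" using FP finite_subset by blast
  have key: "\<exists>A S. A \<in> F \<and> S \<notin> F \<and> S \<subseteq> {1..n} \<and>
     (\<forall>B. B \<in> F \<longrightarrow> B \<noteq> A \<longrightarrow> (B \<subseteq> S \<longleftrightarrow> B \<subseteq> A) \<and> (S \<subseteq> B \<longleftrightarrow> A \<subseteq> B))"
  proof (cases "\<exists>A\<in>F. i \<in> A")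
    case True
    then obtain A0 where "A0 \<in> F \<and> i \<in> A0" by blast
    then obtain A where A: "A \<in> F" "i \<in> A" and Amin: "\<forall>B. B \<in> F \<and> i \<in> B \<longrightarrow> card A \<le> card B"
      using ex_has_least_nat[of "\<lambda>B. B \<in> F \<and> i \<in> B" A0 card] by blast
    have jA: "j \<in> A" using twin A by blast
    have "A - {i} \<notin> F"
    proof
      assume "A - {i} \<in> F"
      then have "i \<in> A - {i}" using twin jA ij(3) by blast
      then show False by simp
    qed
    moreover have "A - {i} \<subseteq> {1..n}" using A FP by blast
    moreover have "\<forall>B. B \<in> F \<longrightarrow> B \<noteq> A \<longrightarrow> (B \<subseteq> A - {i} \<longleftrightarrow> B \<subseteq> A) \<and> (A - {i} \<subseteq> B \<longleftrightarrow> A \<subseteq> B)"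
    proof (intro allI impI conjI iffI)
      fix B assume B: "B \<in> F" "B \<noteq> A"
      { assume "B \<subseteq> A - {i}" then show "B \<subseteq> A" by blast }
      { assume BA: "B \<subseteq> A"
        then have "B \<subset> A" using B by blast
        then have "card B < card A" using finA[OF A(1)] psubset_card_mono by blast
        then have "i \<notin> B" using Amin B by (meson not_le)
        then show "B \<subseteq> A - {i}" using BA by blast }
      { assume "A - {i} \<subseteq> B"
        then have "j \<in> B" using jA ij(3) by blast
        then have "i \<in> B" using twin B by blast
        then show "A \<subseteq> B" using \<open>A - {i} \<subseteq> B\<close> by blast }
      { assume "A \<subseteq> B" then show "A - {i} \<subseteq> B" by blast }
    qed
    ultimately show ?thesis using A by blast
  next
    case False
    have "F \<noteq> {}"
    proof
      assume "F = {}"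
      then have "contains_induced_N {{}::nat set}" using satu[of "{{}}"] by auto
      then show False using empty_not_sat by blast
    qed
    then obtain A0 where "A0 \<in> F" by blast
    then obtain A where A: "A \<in> F" and Amax: "\<forall>B. B \<in> F \<longrightarrow> n - card A \<le> n - card B"
      using ex_has_least_nat[of "\<lambda>B. B \<in> F" A0 "\<lambda>B. n - card B"] by blast
    have iA: "i \<notin> A" using False A by blast
    have "insert i A \<notin> F" using False by blast
    moreover have "insert i A \<subseteq> {1..n}" using A FP ij by blast
    moreover have "\<forall>B. B \<in> F \<longrightarrow> B \<noteq> A \<longrightarrow> (B \<subseteq> insert i A \<longleftrightarrow> B \<subseteq> A) \<and> (insert i A \<subseteq> B \<longleftrightarrow> A \<subseteq> B)"
    proof (intro allI impI conjI)
      fix B assume B: "B \<in> F" "B \<noteq> A"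
      have iB: "i \<notin> B" using False B by blast
      show "B \<subseteq> insert i A \<longleftrightarrow> B \<subseteq> A" using iB by blast
      have "\<not> A \<subseteq> B"
      proof
        assume "A \<subseteq> B"
        then have "A \<subset> B" using B by blast
        then have "card A < card B" using finA[OF B(1)] psubset_card_mono by blast
        moreover have "card B \<le> n" using B FP card_mono[of "{1..n}" B] by auto
        ultimately have "n - card B < n - card A" by linarith
        then show False using Amax B by (meson not_le)
      qed
      then show "insert i A \<subseteq> B \<longleftrightarrow> A \<subseteq> B" using iB by blast
    qed
    ultimately show ?thesis using A by blast
  qed
  then obtain A S where AS: "A \<in> F" "S \<notin> F" "S \<subseteq> {1..n}"
    "\<And>B. B \<in> F \<Longrightarrow> B \<noteq> A \<Longrightarrow> (B \<subseteq> S \<longleftrightarrow> B \<subseteq> A) \<and> (S \<subseteq> B \<longleftrightarrow> A \<subseteq> B)"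
    by metis
  have "\<not> contains_induced_N (insert S F)" by (rule clone_lemma[OF nf AS(1,2) AS(4)])
  moreover have "F \<subset> insert S F" using AS(2) by blast
  moreover have "insert S F \<subseteq> Pow {1..n}" using AS(3) FP by blast
  ultimately have "contains_induced_N (insert S F)" using satu by blast
  then show False using \<open>\<not> contains_induced_N (insert S F)\<close> by blast
qed

theorem theorem1p6:
  fixes n :: nat
  assumes "n \<ge> 3"
  shows "nat \<lceil>log 2 (real n)\<rceil> \<le> isat_N n \<and> isat_N n \<le> 2 * n"
proof -
  have ex: "\<exists>F. induced_N_saturated n F \<and> card F = card (Fam n)"
  proof (intro exI conjI)
    show "induced_N_saturated n (Fam n)" using Fam_saturated assms by simp
  qed simp
  have up: "isat_N n \<le> card (Fam n)" unfolding isat_N_def by (rule Least_le) (use ex in blast)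
  have "\<exists>F. induced_N_saturated n F \<and> card F = isat_N n"
    unfolding isat_N_def by (rule LeastI_ex) (use ex in blast)
  then obtain F where F: "induced_N_saturated n F" "card F = isat_N n" by blast
  have "n \<le> 2 ^ isat_N n" using lower[OF F(1)] F(2) by simp
  then have "real n \<le> 2 ^ isat_N n" by (metis of_nat_le_iff of_nat_numeral of_nat_power)
  then have "log 2 (real n) \<le> log 2 (2 ^ isat_N n)" using assms by (intro log_mono) auto
  then have "log 2 (real n) \<le> real (isat_N n)" by simp
  then have "\<lceil>log 2 (real n)\<rceil> \<le> int (isat_N n)" by (simp add: ceiling_le_iff)
  then have "nat \<lceil>log 2 (real n)\<rceil> \<le> isat_N n" by (rule nat_le_iff[THEN iffD2])
  moreover have "isat_N n \<le> 2 * n" using up Fam_card[of n] assms by simp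
  ultimately show ?thesis by simp
qed

end
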